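(* Let $E_1,H_1,\dots,E_n,H_n$ be logically independent events, let $\mathcal F_k=\{E_1|H_1,\dots,E_k|H_k\}$, and let $(p_1,\dots,p_n)\in[0,1]^n$ be an assessment on $\mathcal F_n$. For each $k=2,\dots,n$, the set of coherent extensions $z$ of $(p_1,\dots,p_k)$ on $\mathcal F_k$ to the quasi conjunction $\mathcal C(\mathcal F_k)$ is the interval $[l_k,u_k]$ with $$l_k=T_L(p_1,\dots,p_k)=\max\Big(\sum_{i=1}^k p_i-(k-1),0\Big),$$ $$u_k=S_0^H(p_1,\dots,p_k)=\begin{cases}1,& p_i=1\text{ for some } i,\\[2pt] \dfrac{\sum_{i=1}^k\frac{p_i}{1-p_i}}{\sum_{i=1}^k\frac{p_i}{1-p_i}+1},& p_i<1\text{ for all } i.\end{cases}$$ *)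

theory Defs
  imports Complex_Main
begin

text \<open>A conditional event E|H is represented by the pair of sets (E, H);
  a family of conditional events is indexed by a finite index set I,
  with consequents A i and antecedents B i, and an assessment p i.\<close>

definition random_gain ::
  "'i set \<Rightarrow> ('i \<Rightarrow> 'w set) \<Rightarrow> ('i \<Rightarrow> 'w set) \<Rightarrow> ('i \<Rightarrow> real) \<Rightarrow> ('i \<Rightarrow> real) \<Rightarrow> 'w \<Rightarrow> real"
  where "random_gain J A B p s \<omega> =
    (\<Sum>j\<in>J. s j * (if \<omega> \<in> B j then 1 else 0) * ((if \<omega> \<in> A j then 1 else 0) - p j))"

definition coherent ::
  "'i set \<Rightarrow> ('i \<Rightarrow> 'w set) \<Rightarrow> ('i \<Rightarrow> 'w set) \<Rightarrow> ('i \<Rightarrow> real) \<Rightarrow> bool"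
  where "coherent I A B p \<longleftrightarrow>
    (\<forall>J. J \<subseteq> I \<longrightarrow> J \<noteq> {} \<longrightarrow>
       (\<forall>s. \<exists>\<omega>\<in>(\<Union>j\<in>J. B j). random_gain J A B p s \<omega> \<ge> 0))"

definition logically_independent :: "nat \<Rightarrow> (nat \<Rightarrow> 'w set) \<Rightarrow> (nat \<Rightarrow> 'w set) \<Rightarrow> bool"
  where "logically_independent n E H \<longleftrightarrow>
    (\<forall>a b :: nat \<Rightarrow> bool.
       (\<Inter>i\<in>{1..n}. (if a i then E i else - E i) \<inter> (if b i then H i else - H i)) \<noteq> {})"

definition qc_cons :: "nat \<Rightarrow> (nat \<Rightarrow> 'w set) \<Rightarrow> (nat \<Rightarrow> 'w set) \<Rightarrow> 'w set"
  where "qc_cons k E H = (\<Inter>i\<in>{1..k}. E i \<union> - H i)"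

definition qc_ant :: "nat \<Rightarrow> (nat \<Rightarrow> 'w set) \<Rightarrow> 'w set"
  where "qc_ant k H = (\<Union>i\<in>{1..k}. H i)"

text \<open>The family F_k extended by its quasi conjunction, placed at index 0.\<close>

definition ext_cons :: "nat \<Rightarrow> (nat \<Rightarrow> 'w set) \<Rightarrow> (nat \<Rightarrow> 'w set) \<Rightarrow> nat \<Rightarrow> 'w set"
  where "ext_cons k E H = (\<lambda>i. if i = 0 then qc_cons k E H else E i)"

definition ext_ant :: "nat \<Rightarrow> (nat \<Rightarrow> 'w set) \<Rightarrow> nat \<Rightarrow> 'w set"
  where "ext_ant k H = (\<lambda>i. if i = 0 then qc_ant k H else H i)"

definition T_L :: "nat \<Rightarrow> (nat \<Rightarrow> real) \<Rightarrow> real"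
  where "T_L k p = max ((\<Sum>i=1..k. p i) - (real k - 1)) 0"

definition S0H :: "nat \<Rightarrow> (nat \<Rightarrow> real) \<Rightarrow> real"
  where "S0H k p =
    (if \<exists>i\<in>{1..k}. p i = 1 then 1
     else (let s = (\<Sum>i=1..k. p i / (1 - p i)) in s / (s + 1)))"

end

theory Submission
  imports Defs
begin

definition phi :: "('i \<Rightarrow> 'w set) \<Rightarrow> ('i \<Rightarrow> 'w set) \<Rightarrow> ('i \<Rightarrow> real) \<Rightarrow> 'i \<Rightarrow> 'w \<Rightarrow> real" where
  "phi A B p j \<omega> = (if \<omega> \<in> B j then 1 else 0) * ((if \<omega> \<in> A j then 1 else 0) - p j)"

lemma gain_phi: "random_gain J A B p s \<omega> = (\<Sum>j\<in>J. s j * phi A B p j \<omega>)"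
  unfolding random_gain_def phi_def by (simp add: mult.assoc)

lemma avg5:
  fixes wa wb wc wd we :: "nat \<Rightarrow> real" and Pa Pb Pc Pd Pe :: "nat \<Rightarrow> 'w"
  assumes fin: "finite M"
    and nn: "\<forall>m\<in>M. wa m \<ge> 0 \<and> wb m \<ge> 0 \<and> wc m \<ge> 0 \<and> wd m \<ge> 0 \<and> we m \<ge> 0"
    and pos: "(\<Sum>m\<in>M. wa m + wb m + wc m + wd m + we m) > 0"
    and inU: "\<forall>m\<in>M. Pa m \<in> U \<and> Pb m \<in> U \<and> Pc m \<in> U \<and> Pd m \<in> U \<and> Pe m \<in> U"
    and zero: "\<forall>j\<in>J. (\<Sum>m\<in>M. wa m * phi A B p j (Pa m) + wb m * phi A B p j (Pb m)
        + wc m * phi A B p j (Pc m) + wd m * phi A B p j (Pd m) + we m * phi A B p j (Pe m)) = 0"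
  shows "\<exists>\<omega>\<in>U. random_gain J A B p s \<omega> \<ge> 0"
proof (rule ccontr)
  assume "\<not> ?thesis"
  then have neg: "\<forall>\<omega>\<in>U. random_gain J A B p s \<omega> < 0" by auto
  define g where "g = random_gain J A B p s"
  define F where "F m = wa m * g (Pa m) + wb m * g (Pb m) + wc m * g (Pc m) + wd m * g (Pd m) + we m * g (Pe m)" for m
  have Fle: "F m \<le> 0" if "m \<in> M" for m
  proof -
    have "wa m * g (Pa m) \<le> 0" "wb m * g (Pb m) \<le> 0" "wc m * g (Pc m) \<le> 0" "wd m * g (Pd m) \<le> 0" "we m * g (Pe m) \<le> 0"
    proof -
      have "g (Pa m) < 0" "g (Pb m) < 0" "g (Pc m) < 0" "g (Pd m) < 0" "g (Pe m) < 0"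
        using inU neg that unfolding g_def by auto
      moreover have "wa m \<ge> 0" "wb m \<ge> 0" "wc m \<ge> 0" "wd m \<ge> 0" "we m \<ge> 0" using nn that by auto
      ultimately show "wa m * g (Pa m) \<le> 0" "wb m * g (Pb m) \<le> 0" "wc m * g (Pc m) \<le> 0" "wd m * g (Pd m) \<le> 0" "we m * g (Pe m) \<le> 0"
        by (auto simp: mult_le_0_iff)
    qed
    then show ?thesis unfolding F_def by linarith
  qed
  obtain m0 where m0: "m0 \<in> M" "wa m0 + wb m0 + wc m0 + wd m0 + we m0 > 0"
  proof (rule ccontr)
    assume "\<not> thesis"
    then have "\<forall>m\<in>M. wa m + wb m + wc m + wd m + we m \<le> 0" using that by force
    then have "(\<Sum>m\<in>M. wa m + wb m + wc m + wd m + we m) \<le> 0" by (intro sum_nonpos) auto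
    then show False using pos by linarith
  qed
  have Flt: "F m0 < 0"
  proof -
    have ga: "g (Pa m0) < 0" "g (Pb m0) < 0" "g (Pc m0) < 0" "g (Pd m0) < 0" "g (Pe m0) < 0"
      using inU neg m0 unfolding g_def by auto
    have n0: "wa m0 \<ge> 0" "wb m0 \<ge> 0" "wc m0 \<ge> 0" "wd m0 \<ge> 0" "we m0 \<ge> 0" using nn m0 by auto
    have "wa m0 > 0 \<or> wb m0 > 0 \<or> wc m0 > 0 \<or> wd m0 > 0 \<or> we m0 > 0" using m0(2) n0 by linarith
    moreover have "wa m0 * g (Pa m0) \<le> 0" "wb m0 * g (Pb m0) \<le> 0" "wc m0 * g (Pc m0) \<le> 0" "wd m0 * g (Pd m0) \<le> 0" "we m0 * g (Pe m0) \<le> 0"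
      using ga n0 by (auto simp: mult_le_0_iff)
    moreover have "wa m0 > 0 \<Longrightarrow> wa m0 * g (Pa m0) < 0" "wb m0 > 0 \<Longrightarrow> wb m0 * g (Pb m0) < 0"
      "wc m0 > 0 \<Longrightarrow> wc m0 * g (Pc m0) < 0" "wd m0 > 0 \<Longrightarrow> wd m0 * g (Pd m0) < 0" "we m0 > 0 \<Longrightarrow> we m0 * g (Pe m0) < 0"
      using ga by (auto intro: mult_pos_neg)
    ultimately show ?thesis unfolding F_def by linarith
  qed
  have "sum F M < sum (\<lambda>_. 0) M"
    by (rule sum_strict_mono_ex1) (use fin Fle m0 Flt in auto)
  then have lt: "sum F M < 0" by simp
  have "sum F M = (\<Sum>j\<in>J. s j * (\<Sum>m\<in>M. wa m * phi A B p j (Pa m) + wb m * phi A B p j (Pb m)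
        + wc m * phi A B p j (Pc m) + wd m * phi A B p j (Pd m) + we m * phi A B p j (Pe m)))"
    unfolding F_def g_def gain_phi
    by (simp add: sum_distrib_left sum.distrib algebra_simps sum.swap[of _ J M])
  also have "\<dots> = 0" using zero by simp
  finally show False using lt by simp
qed

definition pt :: "nat \<Rightarrow> (nat \<Rightarrow> 'w set) \<Rightarrow> (nat \<Rightarrow> 'w set) \<Rightarrow> (nat \<Rightarrow> bool) \<Rightarrow> (nat \<Rightarrow> bool) \<Rightarrow> 'w" where
  "pt n E H a b = (SOME \<omega>. \<forall>i\<in>{1..n}. (\<omega> \<in> E i \<longleftrightarrow> a i) \<and> (\<omega> \<in> H i \<longleftrightarrow> b i))"

lemma pt_prop:
  assumes "logically_independent n E H" "i \<in> {1..n}"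
  shows "(pt n E H a b \<in> E i \<longleftrightarrow> a i) \<and> (pt n E H a b \<in> H i \<longleftrightarrow> b i)"
proof -
  have "(\<Inter>i\<in>{1..n}. (if a i then E i else - E i) \<inter> (if b i then H i else - H i)) \<noteq> {}"
    using assms(1) unfolding logically_independent_def by blast
  then obtain \<omega> where "\<omega> \<in> (\<Inter>i\<in>{1..n}. (if a i then E i else - E i) \<inter> (if b i then H i else - H i))" by blast
  then have "\<forall>i\<in>{1..n}. (\<omega> \<in> E i \<longleftrightarrow> a i) \<and> (\<omega> \<in> H i \<longleftrightarrow> b i)"
    by (auto split: if_splits)
  then have "\<forall>i\<in>{1..n}. (pt n E H a b \<in> E i \<longleftrightarrow> a i) \<and> (pt n E H a b \<in> H i \<longleftrightarrow> b i)"
    unfolding pt_def by (rule someI)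
  then show ?thesis using assms(2) by blast
qed

lemma sum_if_eq:
  assumes "finite M" "j \<in> M"
  shows "(\<Sum>m\<in>M. w m * (if m = j then X else Y)) = Y * sum w M + (X - Y) * (w j :: real)"
proof -
  have "(\<Sum>m\<in>M. w m * (if m = j then X else Y)) = (\<Sum>m\<in>M. Y * w m + (if m = j then (X - Y) * w m else 0))"
    by (rule sum.cong) (auto simp: algebra_simps)
  also have "\<dots> = Y * sum w M + (X - Y) * w j"
    using assms by (simp add: sum.distrib sum_distrib_left)
  finally show ?thesis .
qed

locale ctx =
  fixes n :: nat and E H :: "nat \<Rightarrow> 'w set" and p :: "nat \<Rightarrow> real" and k :: nat
  assumes LI: "logically_independent n E H"
    and pr: "\<forall>i\<in>{1..n}. 0 \<le> p i \<and> p i \<le> 1"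
    and k2: "2 \<le> k" and kn: "k \<le> n"
begin

definition "Pa m = pt n E H (\<lambda>i. i \<noteq> m) (\<lambda>_. True)"
definition "Pb = pt n E H (\<lambda>_. True) (\<lambda>_. True)"
definition "Pc m = pt n E H (\<lambda>_. False) (\<lambda>i. i = m)"
definition "Pd m = pt n E H (\<lambda>_. True) (\<lambda>i. i = m)"
definition "Pe = pt n E H (\<lambda>_. False) (\<lambda>_. True)"

lemma ptk: "i \<in> {1..k} \<Longrightarrow> (pt n E H a b \<in> E i \<longleftrightarrow> a i) \<and> (pt n E H a b \<in> H i \<longleftrightarrow> b i)"
  using pt_prop[OF LI, of i] kn by auto

lemma pk: "i \<in> {1..k} \<Longrightarrow> 0 \<le> p i \<and> p i \<le> 1"
  using pr kn by auto

lemma pt_ant: "pt n E H a b \<in> qc_ant k H \<longleftrightarrow> (\<exists>i\<in>{1..k}. b i)"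
proof -
  have "\<forall>i\<in>{1..k}. (pt n E H a b \<in> H i) \<longleftrightarrow> b i" using ptk by simp
  then show ?thesis unfolding qc_ant_def by auto
qed

lemma pt_cons: "pt n E H a b \<in> qc_cons k E H \<longleftrightarrow> (\<forall>i\<in>{1..k}. a i \<or> \<not> b i)"
proof -
  have "\<forall>i\<in>{1..k}. (pt n E H a b \<in> E i \<union> - H i) \<longleftrightarrow> (a i \<or> \<not> b i)" using ptk by simp
  then show ?thesis unfolding qc_cons_def by auto
qed

abbreviation "A' \<equiv> ext_cons k E H"
abbreviation "B' \<equiv> ext_ant k H"

lemma phi_pos: "j \<in> {1..k} \<Longrightarrow> phi A' B' (p(0:=z)) j (pt n E H a b) =
   (if b j then 1 else 0) * ((if a j then 1 else 0) - p j)"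
  unfolding phi_def ext_cons_def ext_ant_def using ptk[of j a b] by auto

lemma phi_zero: "phi A' B' (p(0:=z)) 0 (pt n E H a b) =
   (if (\<exists>i\<in>{1..k}. b i) then 1 else 0) * ((if (\<forall>i\<in>{1..k}. a i \<or> \<not> b i) then 1 else 0) - z)"
  unfolding phi_def ext_cons_def ext_ant_def using pt_ant pt_cons by simp

lemma in_ant: "m \<in> {1..k} \<Longrightarrow> Pa m \<in> qc_ant k H \<and> Pb \<in> qc_ant k H \<and> Pc m \<in> qc_ant k H \<and> Pd m \<in> qc_ant k H \<and> Pe \<in> qc_ant k H"
  unfolding Pa_def Pb_def Pc_def Pd_def Pe_def pt_ant by auto

definition "cf wa wb wc wd we j = (1 - p j) * (sum wa {1..k} + sum wb {1..k}) - wa j - p j * wc j + (1 - p j) * wd j - p j * sum we {1..k}"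
definition "cf0 z wa wb wc wd we = sum wb {1..k} + sum wd {1..k} - z * (sum wa {1..k} + sum wb {1..k} + sum wc {1..k} + sum wd {1..k} + sum we {1..k})"

lemma closed_pos:
  assumes j: "j \<in> {1..k}"
  shows "(\<Sum>m\<in>{1..k}. wa m * phi A' B' (p(0:=z)) j (Pa m) + wb m * phi A' B' (p(0:=z)) j Pb
        + wc m * phi A' B' (p(0:=z)) j (Pc m) + wd m * phi A' B' (p(0:=z)) j (Pd m) + we m * phi A' B' (p(0:=z)) j Pe)
     = cf wa wb wc wd we j"
proof -
  have "(\<Sum>m\<in>{1..k}. wa m * phi A' B' (p(0:=z)) j (Pa m) + wb m * phi A' B' (p(0:=z)) j Pb
        + wc m * phi A' B' (p(0:=z)) j (Pc m) + wd m * phi A' B' (p(0:=z)) j (Pd m) + we m * phi A' B' (p(0:=z)) j Pe)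
     = (\<Sum>m\<in>{1..k}. wa m * (if m = j then - p j else 1 - p j) + wb m * (1 - p j)
        + wc m * (if m = j then - p j else 0) + wd m * (if m = j then 1 - p j else 0) + we m * (- p j))"
    unfolding Pa_def Pb_def Pc_def Pd_def Pe_def using j by (intro sum.cong) (auto simp: phi_pos)
  also have "\<dots> = (\<Sum>m\<in>{1..k}. wa m * (if m = j then - p j else 1 - p j)) + (\<Sum>m\<in>{1..k}. wb m * (1 - p j))
        + (\<Sum>m\<in>{1..k}. wc m * (if m = j then - p j else 0)) + (\<Sum>m\<in>{1..k}. wd m * (if m = j then 1 - p j else 0)) + (\<Sum>m\<in>{1..k}. we m * (- p j))"
    by (simp only: sum.distrib)
  also have "\<dots> = cf wa wb wc wd we j"
    unfolding cf_def sum_if_eq[OF finite_atLeastAtMost j] sum_distrib_right[symmetric]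
    by (simp add: algebra_simps)
  finally show ?thesis .
qed

lemma closed_zero:
  shows "(\<Sum>m\<in>{1..k}. wa m * phi A' B' (p(0:=z)) 0 (Pa m) + wb m * phi A' B' (p(0:=z)) 0 Pb
        + wc m * phi A' B' (p(0:=z)) 0 (Pc m) + wd m * phi A' B' (p(0:=z)) 0 (Pd m) + we m * phi A' B' (p(0:=z)) 0 Pe)
     = cf0 z wa wb wc wd we"
proof -
  have k1: "1 \<in> {1..k}" "2 \<in> {1..k}" using k2 by auto
  have "(\<Sum>m\<in>{1..k}. wa m * phi A' B' (p(0:=z)) 0 (Pa m) + wb m * phi A' B' (p(0:=z)) 0 Pb
        + wc m * phi A' B' (p(0:=z)) 0 (Pc m) + wd m * phi A' B' (p(0:=z)) 0 (Pd m) + we m * phi A' B' (p(0:=z)) 0 Pe)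
     = (\<Sum>m\<in>{1..k}. wa m * (- z) + wb m * (1 - z)
        + wc m * (- z) + wd m * (1 - z) + we m * (- z))"
  proof (intro sum.cong refl)
    fix m assume m: "m \<in> {1..k}"
    have "phi A' B' (p(0:=z)) 0 (Pa m) = - z" unfolding Pa_def phi_zero using m by auto
    moreover have "phi A' B' (p(0:=z)) 0 Pb = 1 - z" unfolding Pb_def phi_zero using m by auto
    moreover have "phi A' B' (p(0:=z)) 0 (Pc m) = - z" unfolding Pc_def phi_zero using m by auto
    moreover have "phi A' B' (p(0:=z)) 0 (Pd m) = 1 - z" unfolding Pd_def phi_zero using m by auto
    moreover have "phi A' B' (p(0:=z)) 0 Pe = - z" unfolding Pe_def phi_zero using m by auto
    ultimately show "wa m * phi A' B' (p(0:=z)) 0 (Pa m) + wb m * phi A' B' (p(0:=z)) 0 Pb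
        + wc m * phi A' B' (p(0:=z)) 0 (Pc m) + wd m * phi A' B' (p(0:=z)) 0 (Pd m) + we m * phi A' B' (p(0:=z)) 0 Pe
      = wa m * (- z) + wb m * (1 - z) + wc m * (- z) + wd m * (1 - z) + we m * (- z)" by simp
  qed
  also have "\<dots> = cf0 z wa wb wc wd we"
    unfolding cf0_def by (simp add: sum.distrib sum_distrib_right[symmetric] sum_subtractf sum_distrib_left algebra_simps)
  finally show ?thesis .
qed


definition "N5 wa wb wc wd we = sum wa {1..k} + sum wb {1..k} + sum wc {1..k} + sum wd {1..k} + (sum we {1..k} :: real)"
definition "C5 wb wd = sum wb {1..k} + (sum wd {1..k} :: real)"

definition "Q = (\<Sum>m\<in>{1..k}. 1 - p m)"

lemma sum_p: "(\<Sum>m\<in>{1..k}. p m) = real k - Q"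
  unfolding Q_def by (simp add: sum_subtractf)

lemma TL_eq: "T_L k p = max (1 - Q) 0"
  unfolding T_L_def sum_p by simp

definition "good wa wb wc wd we c \<longleftrightarrow>
   (\<forall>m\<in>{1..k}. wa m \<ge> 0 \<and> wb m \<ge> 0 \<and> wc m \<ge> 0 \<and> wd m \<ge> 0 \<and> we m \<ge> 0) \<and>
   (\<forall>j\<in>{1..k}. cf wa wb wc wd we j = 0) \<and> N5 wa wb wc wd we > 0 \<and> C5 wb wd = c * N5 wa wb wc wd we"

lemma kpos: "real k > 0" using k2 by simp

lemma lower_exists: "\<exists>wa wb wc wd we. good wa wb wc wd we (T_L k p)"
proof (cases "Q \<le> 1")
  case True
  define wa where "wa m = 1 - p m" for m
  define wb where "wb (m::nat) = (1 - Q) / real k" for m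
  define z0 where "z0 (m::nat) = (0::real)" for m
  have sa: "sum wa {1..k} = Q" unfolding wa_def Q_def by simp
  have sb: "sum wb {1..k} = 1 - Q" unfolding wb_def using kpos by simp
  have sz: "sum z0 {1..k} = 0" unfolding z0_def by simp
  have "good wa wb z0 z0 z0 (T_L k p)"
    unfolding good_def
  proof (intro conjI)
    show "\<forall>m\<in>{1..k}. wa m \<ge> 0 \<and> wb m \<ge> 0 \<and> z0 m \<ge> 0 \<and> z0 m \<ge> 0 \<and> z0 m \<ge> 0"
    proof
      fix m assume "m \<in> {1..k}"
      then show "wa m \<ge> 0 \<and> wb m \<ge> 0 \<and> z0 m \<ge> 0 \<and> z0 m \<ge> 0 \<and> z0 m \<ge> 0"
        unfolding wa_def wb_def z0_def using pk True kpos by auto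
    qed
  next
    show "\<forall>j\<in>{1..k}. cf wa wb z0 z0 z0 j = 0"
    proof
      fix j assume "j \<in> {1..k}"
      show "cf wa wb z0 z0 z0 j = 0" unfolding cf_def sa sb sz by (simp add: wa_def z0_def)
    qed
  next
    show "N5 wa wb z0 z0 z0 > 0" unfolding N5_def sa sb sz by simp
  next
    show "C5 wb z0 = T_L k p * N5 wa wb z0 z0 z0" unfolding N5_def C5_def sa sb sz TL_eq using True by simp
  qed
  then show ?thesis by blast
next
  case False
  show ?thesis
  proof (cases "\<exists>i0\<in>{1..k}. p i0 = 0")
    case True
    then obtain i0 where i0: "i0 \<in> {1..k}" "p i0 = 0" by blast
    define wc where "wc m = (if m = i0 then 1 else 0::real)" for m
    define z0 where "z0 (m::nat) = (0::real)" for m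
    have sc: "sum wc {1..k} = 1" unfolding wc_def using i0 by simp
    have sz: "sum z0 {1..k} = 0" unfolding z0_def by simp
    have "good z0 z0 wc z0 z0 (T_L k p)"
      unfolding good_def
    proof (intro conjI)
      show "\<forall>m\<in>{1..k}. z0 m \<ge> 0 \<and> z0 m \<ge> 0 \<and> wc m \<ge> 0 \<and> z0 m \<ge> 0 \<and> z0 m \<ge> 0"
      proof
        fix m assume "m \<in> {1..k}"
        then show "z0 m \<ge> 0 \<and> z0 m \<ge> 0 \<and> wc m \<ge> 0 \<and> z0 m \<ge> 0 \<and> z0 m \<ge> 0"
          unfolding wc_def z0_def by auto
      qed
    next
      show "\<forall>j\<in>{1..k}. cf z0 z0 wc z0 z0 j = 0"
      proof
        fix j assume "j \<in> {1..k}"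
        show "cf z0 z0 wc z0 z0 j = 0" unfolding cf_def sc sz using i0 by (simp add: wc_def z0_def)
      qed
    next
      show "N5 z0 z0 wc z0 z0 > 0" unfolding N5_def sc sz by simp
    next
      show "C5 z0 z0 = T_L k p * N5 z0 z0 wc z0 z0" unfolding N5_def C5_def sc sz TL_eq using False by simp
    qed
    then show ?thesis by blast
  next
    case False2: False
    have ppos: "p m > 0" if "m \<in> {1..k}" for m using False2 pk[OF that] that by force
    have Qpos: "Q > 0" using False by simp
    define wa where "wa m = (1 - p m) / Q" for m
    define wc where "wc m = (1 - p m) * (Q - 1) / (Q * p m)" for m
    define z0 where "z0 (m::nat) = (0::real)" for m
    have sa: "sum wa {1..k} = 1" unfolding wa_def using Qpos by (simp add: sum_divide_distrib[symmetric] Q_def)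
    have sz: "sum z0 {1..k} = 0" unfolding z0_def by simp
    have wcnn: "wc m \<ge> 0" if "m \<in> {1..k}" for m
      unfolding wc_def using pk[OF that] ppos[OF that] Qpos False by (intro divide_nonneg_pos mult_nonneg_nonneg) auto
    have scnn: "sum wc {1..k} \<ge> 0" using wcnn by (intro sum_nonneg) auto
    have "good wa z0 wc z0 z0 (T_L k p)"
      unfolding good_def
    proof (intro conjI)
      show "\<forall>m\<in>{1..k}. wa m \<ge> 0 \<and> z0 m \<ge> 0 \<and> wc m \<ge> 0 \<and> z0 m \<ge> 0 \<and> z0 m \<ge> 0"
      proof
        fix m assume m: "m \<in> {1..k}"
        then show "wa m \<ge> 0 \<and> z0 m \<ge> 0 \<and> wc m \<ge> 0 \<and> z0 m \<ge> 0 \<and> z0 m \<ge> 0"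
          unfolding wa_def z0_def using wcnn[OF m] pk[OF m] Qpos by auto
      qed
    next
      show "\<forall>j\<in>{1..k}. cf wa z0 wc z0 z0 j = 0"
      proof
        fix j assume j: "j \<in> {1..k}"
        have "p j > 0" using ppos[OF j] .
        then show "cf wa z0 wc z0 z0 j = 0" unfolding cf_def sa sz using Qpos by (simp add: wa_def wc_def z0_def field_simps)
      qed
    next
      show "N5 wa z0 wc z0 z0 > 0" unfolding N5_def sa sz using scnn by simp
    next
      show "C5 z0 z0 = T_L k p * N5 wa z0 wc z0 z0" unfolding N5_def C5_def sz TL_eq using False by simp
    qed
    then show ?thesis by blast
  qed
qed

lemma upper_exists: "\<exists>wa wb wc wd we. good wa wb wc wd we (S0H k p)"
proof (cases "\<exists>i\<in>{1..k}. p i = 1")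
  case True
  then obtain m0 where m0: "m0 \<in> {1..k}" "p m0 = 1" by blast
  define wd where "wd m = (if m = m0 then 1 else 0::real)" for m
  define z0 where "z0 (m::nat) = (0::real)" for m
  have sd: "sum wd {1..k} = 1" unfolding wd_def using m0 by simp
  have sz: "sum z0 {1..k} = 0" unfolding z0_def by simp
  have S: "S0H k p = 1" unfolding S0H_def using True by simp
  have "good z0 z0 z0 wd z0 (S0H k p)"
    unfolding good_def
  proof (intro conjI)
    show "\<forall>m\<in>{1..k}. z0 m \<ge> 0 \<and> z0 m \<ge> 0 \<and> z0 m \<ge> 0 \<and> wd m \<ge> 0 \<and> z0 m \<ge> 0"
    proof
      fix m assume "m \<in> {1..k}"
      then show "z0 m \<ge> 0 \<and> z0 m \<ge> 0 \<and> z0 m \<ge> 0 \<and> wd m \<ge> 0 \<and> z0 m \<ge> 0"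
        unfolding wd_def z0_def by auto
    qed
  next
    show "\<forall>j\<in>{1..k}. cf z0 z0 z0 wd z0 j = 0"
    proof
      fix j assume "j \<in> {1..k}"
      show "cf z0 z0 z0 wd z0 j = 0" unfolding cf_def sd sz using m0 by (simp add: wd_def z0_def)
    qed
  next
    show "N5 z0 z0 z0 wd z0 > 0" unfolding N5_def sd sz by simp
  next
    show "C5 z0 wd = S0H k p * N5 z0 z0 z0 wd z0" unfolding N5_def C5_def sd sz S by simp
  qed
  then show ?thesis by blast
next
  case False
  have plt: "p m < 1" if "m \<in> {1..k}" for m using False pk[OF that] that by force
  define \<sigma> where "\<sigma> = (\<Sum>i=1..k. p i / (1 - p i))"
  have snn: "\<sigma> \<ge> 0" unfolding \<sigma>_def using pk plt by (intro sum_nonneg divide_nonneg_pos) auto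
  define wd where "wd m = p m / (1 - p m)" for m
  define we where "we (m::nat) = 1 / real k" for m
  define z0 where "z0 (m::nat) = (0::real)" for m
  have sd: "sum wd {1..k} = \<sigma>" unfolding wd_def \<sigma>_def by simp
  have se: "sum we {1..k} = 1" unfolding we_def using kpos by simp
  have sz: "sum z0 {1..k} = 0" unfolding z0_def by simp
  have S: "S0H k p = \<sigma> / (\<sigma> + 1)" unfolding S0H_def \<sigma>_def using False by (simp add: Let_def)
  have "good z0 z0 z0 wd we (S0H k p)"
    unfolding good_def
  proof (intro conjI)
    show "\<forall>m\<in>{1..k}. z0 m \<ge> 0 \<and> z0 m \<ge> 0 \<and> z0 m \<ge> 0 \<and> wd m \<ge> 0 \<and> we m \<ge> 0"
    proof
      fix m assume m: "m \<in> {1..k}"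
      then show "z0 m \<ge> 0 \<and> z0 m \<ge> 0 \<and> z0 m \<ge> 0 \<and> wd m \<ge> 0 \<and> we m \<ge> 0"
        unfolding wd_def we_def z0_def using pk[OF m] plt[OF m] by auto
    qed
  next
    show "\<forall>j\<in>{1..k}. cf z0 z0 z0 wd we j = 0"
    proof
      fix j assume j: "j \<in> {1..k}"
      have "p j < 1" using plt[OF j] .
      then show "cf z0 z0 z0 wd we j = 0" unfolding cf_def sd se sz by (simp add: wd_def z0_def field_simps)
    qed
  next
    show "N5 z0 z0 z0 wd we > 0" unfolding N5_def sd se sz using snn by simp
  next
    show "C5 z0 wd = S0H k p * N5 z0 z0 z0 wd we" unfolding N5_def C5_def sd se sz S using snn by (simp add: field_simps)
  qed
  then show ?thesis by blast
qed


lemma lin_sum: "(\<Sum>m\<in>A. a * f m + b * g m) = a * sum f A + b * (sum g A :: real)"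
  by (simp add: sum.distrib sum_distrib_left)

lemma cf0_eq: "cf0 z wa wb wc wd we = C5 wb wd - z * N5 wa wb wc wd we"
  unfolding cf0_def C5_def N5_def by simp

lemma mix_exists:
  assumes lo: "T_L k p \<le> z" and up: "z \<le> S0H k p"
  shows "\<exists>wa wb wc wd we. (\<forall>m\<in>{1..k}. wa m \<ge> 0 \<and> wb m \<ge> 0 \<and> wc m \<ge> 0 \<and> wd m \<ge> 0 \<and> we m \<ge> 0) \<and>
     (\<forall>j\<in>{1..k}. cf wa wb wc wd we j = 0) \<and> cf0 z wa wb wc wd we = 0 \<and> N5 wa wb wc wd we > 0"
proof -
  obtain La Lb Lc Ld Le where L: "good La Lb Lc Ld Le (T_L k p)" using lower_exists by blast
  obtain Ua Ub Uc Ud Ue where U: "good Ua Ub Uc Ud Ue (S0H k p)" using upper_exists by blast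
  show ?thesis
  proof (cases "z = T_L k p")
    case True
    have "(\<forall>m\<in>{1..k}. La m \<ge> 0 \<and> Lb m \<ge> 0 \<and> Lc m \<ge> 0 \<and> Ld m \<ge> 0 \<and> Le m \<ge> 0) \<and>
     (\<forall>j\<in>{1..k}. cf La Lb Lc Ld Le j = 0) \<and> cf0 z La Lb Lc Ld Le = 0 \<and> N5 La Lb Lc Ld Le > 0"
      using L True unfolding good_def cf0_eq by auto
    then show ?thesis by blast
  next
    case False
    define NL where "NL = N5 La Lb Lc Ld Le"
    define NU where "NU = N5 Ua Ub Uc Ud Ue"
    have NL: "NL > 0" "C5 Lb Ld = T_L k p * NL" using L unfolding good_def NL_def by auto
    have NU: "NU > 0" "C5 Ub Ud = S0H k p * NU" using U unfolding good_def NU_def by auto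
    define a where "a = (S0H k p - z) / NL"
    define b where "b = (z - T_L k p) / NU"
    have a0: "a \<ge> 0" unfolding a_def using NL up by simp
    have b0: "b > 0" unfolding b_def using NU lo False by simp
    define wa where "wa m = a * La m + b * Ua m" for m
    define wb where "wb m = a * Lb m + b * Ub m" for m
    define wc where "wc m = a * Lc m + b * Uc m" for m
    define wd where "wd m = a * Ld m + b * Ud m" for m
    define we where "we m = a * Le m + b * Ue m" for m
    have N: "N5 wa wb wc wd we = a * NL + b * NU"
      unfolding N5_def NL_def NU_def wa_def wb_def wc_def wd_def we_def lin_sum by (simp add: algebra_simps)
    have C: "C5 wb wd = a * C5 Lb Ld + b * C5 Ub Ud"
      unfolding C5_def wb_def wd_def lin_sum by (simp add: algebra_simps)
    have cfc: "cf wa wb wc wd we j = a * cf La Lb Lc Ld Le j + b * cf Ua Ub Uc Ud Ue j" for j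
      unfolding cf_def wa_def wb_def wc_def wd_def we_def lin_sum by (simp add: algebra_simps)
    have "(\<forall>m\<in>{1..k}. wa m \<ge> 0 \<and> wb m \<ge> 0 \<and> wc m \<ge> 0 \<and> wd m \<ge> 0 \<and> we m \<ge> 0)"
      using L U a0 b0 unfolding good_def wa_def wb_def wc_def wd_def we_def by auto
    moreover have "\<forall>j\<in>{1..k}. cf wa wb wc wd we j = 0" using L U unfolding good_def cfc by auto
    moreover have "cf0 z wa wb wc wd we = 0"
    proof -
      have "cf0 z wa wb wc wd we = a * (T_L k p * NL) + b * (S0H k p * NU) - z * (a * NL + b * NU)"
        unfolding cf0_eq N C NL(2) NU(2) ..
      also have "\<dots> = (S0H k p - z) * T_L k p + (z - T_L k p) * S0H k p - z * ((S0H k p - z) + (z - T_L k p))"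
        unfolding a_def b_def using NL(1) NU(1) by (simp add: field_simps)
      also have "\<dots> = 0" by (simp add: algebra_simps)
      finally show ?thesis .
    qed
    moreover have "N5 wa wb wc wd we > 0" unfolding N using a0 b0 NL NU
      by (simp add: add_nonneg_pos)
    ultimately show ?thesis by blast
  qed
qed


lemma suff:
  assumes lo: "T_L k p \<le> z" and up: "z \<le> S0H k p"
  shows "coherent (insert 0 {1..k}) A' B' (p(0:=z))"
  unfolding coherent_def
proof (intro allI impI)
  fix J s assume J: "J \<subseteq> insert 0 {1..k}" and Jne: "J \<noteq> {}"
  show "\<exists>\<omega>\<in>(\<Union>j\<in>J. B' j). random_gain J A' B' (p(0:=z)) s \<omega> \<ge> 0"
  proof (cases "0 \<in> J")
    case True
    obtain wa wb wc wd we where W: "\<forall>m\<in>{1..k}. wa m \<ge> 0 \<and> wb m \<ge> 0 \<and> wc m \<ge> 0 \<and> wd m \<ge> 0 \<and> we m \<ge> 0"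
      "\<forall>j\<in>{1..k}. cf wa wb wc wd we j = 0" "cf0 z wa wb wc wd we = 0" "N5 wa wb wc wd we > 0"
      using mix_exists[OF lo up] by blast
    show ?thesis
    proof (rule avg5[where M="{1..k}" and wa=wa and wb=wb and wc=wc and wd=wd and we=we
          and Pa=Pa and Pb="\<lambda>_. Pb" and Pc=Pc and Pd=Pd and Pe="\<lambda>_. Pe"])
      show "finite {1..k}" by simp
      show "\<forall>m\<in>{1..k}. wa m \<ge> 0 \<and> wb m \<ge> 0 \<and> wc m \<ge> 0 \<and> wd m \<ge> 0 \<and> we m \<ge> 0" using W(1) .
      show "(\<Sum>m\<in>{1..k}. wa m + wb m + wc m + wd m + we m) > 0"
        using W(4) unfolding N5_def by (simp add: sum.distrib)
      have "B' 0 = qc_ant k H" unfolding ext_ant_def by simp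
      then have sub: "qc_ant k H \<subseteq> (\<Union>j\<in>J. B' j)" using True by blast
      show "\<forall>m\<in>{1..k}. Pa m \<in> (\<Union>j\<in>J. B' j) \<and> Pb \<in> (\<Union>j\<in>J. B' j) \<and> Pc m \<in> (\<Union>j\<in>J. B' j) \<and> Pd m \<in> (\<Union>j\<in>J. B' j) \<and> Pe \<in> (\<Union>j\<in>J. B' j)"
        using in_ant sub by blast
      show "\<forall>j\<in>J. (\<Sum>m\<in>{1..k}. wa m * phi A' B' (p(0:=z)) j (Pa m) + wb m * phi A' B' (p(0:=z)) j Pb
        + wc m * phi A' B' (p(0:=z)) j (Pc m) + wd m * phi A' B' (p(0:=z)) j (Pd m) + we m * phi A' B' (p(0:=z)) j Pe) = 0"
      proof
        fix j assume "j \<in> J"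
        then have "j = 0 \<or> j \<in> {1..k}" using J by blast
        then show "(\<Sum>m\<in>{1..k}. wa m * phi A' B' (p(0:=z)) j (Pa m) + wb m * phi A' B' (p(0:=z)) j Pb
        + wc m * phi A' B' (p(0:=z)) j (Pc m) + wd m * phi A' B' (p(0:=z)) j (Pd m) + we m * phi A' B' (p(0:=z)) j Pe) = 0"
          using closed_zero closed_pos W(2,3) by auto
      qed
    qed
  next
    case False
    then have J1: "J \<subseteq> {1..k}" using J by blast
    then have finJ: "finite J" using finite_subset by blast
    define z0 where "z0 (m::nat) = (0::real)" for m
    show ?thesis
    proof (rule avg5[where M="J" and wa=z0 and wb=z0 and wc="\<lambda>m. 1 - p m" and wd=p and we=z0
          and Pa=Pd and Pb=Pd and Pc=Pc and Pd=Pd and Pe=Pd])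
      show "finite J" by fact
      show "\<forall>m\<in>J. z0 m \<ge> 0 \<and> z0 m \<ge> 0 \<and> 1 - p m \<ge> 0 \<and> p m \<ge> 0 \<and> z0 m \<ge> 0"
        using J1 pk unfolding z0_def by auto
      have "(\<Sum>m\<in>J. z0 m + z0 m + (1 - p m) + p m + z0 m) = real (card J)" unfolding z0_def by simp
      also have "\<dots> > 0" using finJ Jne by (simp add: card_gt_0_iff)
      finally show "(\<Sum>m\<in>J. z0 m + z0 m + (1 - p m) + p m + z0 m) > 0" .
      have inH: "Pc m \<in> (\<Union>j\<in>J. B' j) \<and> Pd m \<in> (\<Union>j\<in>J. B' j)" if m: "m \<in> J" for m
      proof -
        have m1: "m \<in> {1..k}" "m \<noteq> 0" using m J1 by auto
        have "Pc m \<in> H m" "Pd m \<in> H m" unfolding Pc_def Pd_def using ptk[OF m1(1)] by auto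
        moreover have "B' m = H m" unfolding ext_ant_def using m1 by simp
        ultimately show ?thesis using m by blast
      qed
      show "\<forall>m\<in>J. Pd m \<in> (\<Union>j\<in>J. B' j) \<and> Pd m \<in> (\<Union>j\<in>J. B' j) \<and> Pc m \<in> (\<Union>j\<in>J. B' j) \<and> Pd m \<in> (\<Union>j\<in>J. B' j) \<and> Pd m \<in> (\<Union>j\<in>J. B' j)"
        using inH by blast
      show "\<forall>j\<in>J. (\<Sum>m\<in>J. z0 m * phi A' B' (p(0:=z)) j (Pd m) + z0 m * phi A' B' (p(0:=z)) j (Pd m)
        + (1 - p m) * phi A' B' (p(0:=z)) j (Pc m) + p m * phi A' B' (p(0:=z)) j (Pd m) + z0 m * phi A' B' (p(0:=z)) j (Pd m)) = 0"
      proof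
        fix j assume j: "j \<in> J"
        then have j1: "j \<in> {1..k}" using J1 by blast
        have "(\<Sum>m\<in>J. z0 m * phi A' B' (p(0:=z)) j (Pd m) + z0 m * phi A' B' (p(0:=z)) j (Pd m)
          + (1 - p m) * phi A' B' (p(0:=z)) j (Pc m) + p m * phi A' B' (p(0:=z)) j (Pd m) + z0 m * phi A' B' (p(0:=z)) j (Pd m))
          = (\<Sum>m\<in>J. (1 - p m) * (if m = j then - p j else 0)) + (\<Sum>m\<in>J. p m * (if m = j then 1 - p j else 0))"
          unfolding sum.distrib[symmetric]
          by (rule sum.cong) (auto simp: z0_def Pc_def Pd_def phi_pos[OF j1])
        also have "\<dots> = 0" unfolding sum_if_eq[OF finJ j] by (simp add: algebra_simps)
        finally show "(\<Sum>m\<in>J. z0 m * phi A' B' (p(0:=z)) j (Pd m) + z0 m * phi A' B' (p(0:=z)) j (Pd m)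
          + (1 - p m) * phi A' B' (p(0:=z)) j (Pc m) + p m * phi A' B' (p(0:=z)) j (Pd m) + z0 m * phi A' B' (p(0:=z)) j (Pd m)) = 0" .
      qed
    qed
  qed
qed


lemma phi_gpos: "j \<in> {1..k} \<Longrightarrow> phi A' B' (p(0:=z)) j \<omega> = (if \<omega> \<in> H j then 1 else 0) * ((if \<omega> \<in> E j then 1 else 0) - p j)"
  unfolding phi_def ext_cons_def ext_ant_def by auto

lemma phi_gzero: "\<omega> \<in> qc_ant k H \<Longrightarrow> phi A' B' (p(0:=z)) 0 \<omega> = (if \<omega> \<in> qc_cons k E H then 1 else 0) - z"
  unfolding phi_def ext_cons_def ext_ant_def by auto

lemma union_ant: "J \<subseteq> insert 0 {1..k} \<Longrightarrow> \<omega> \<in> (\<Union>j\<in>J. B' j) \<Longrightarrow> \<omega> \<in> qc_ant k H"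
  unfolding ext_ant_def qc_ant_def by (auto split: if_splits)

lemma gain_full: "random_gain (insert 0 {1..k}) A' B' (p(0:=z)) s \<omega> =
   s 0 * phi A' B' (p(0:=z)) 0 \<omega> + (\<Sum>i\<in>{1..k}. s i * phi A' B' (p(0:=z)) i \<omega>)"
  unfolding gain_phi by (simp add: sum.insert)

lemma coh_get:
  assumes "coherent (insert 0 {1..k}) A' B' (p(0:=z))" "J \<subseteq> insert 0 {1..k}" "J \<noteq> {}"
  shows "\<exists>\<omega>\<in>qc_ant k H. random_gain J A' B' (p(0:=z)) s \<omega> \<ge> 0"
  using assms union_ant unfolding coherent_def by meson

lemma nec01:
  assumes coh: "coherent (insert 0 {1..k}) A' B' (p(0:=z))"
  shows "0 \<le> z" "z \<le> 1"
proof -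
  obtain \<omega> where w: "\<omega> \<in> qc_ant k H" "random_gain {0} A' B' (p(0:=z)) (\<lambda>_. -1) \<omega> \<ge> 0"
    using coh_get[OF coh, of "{0}"] by auto
  then show "0 \<le> z" unfolding gain_phi using phi_gzero[OF w(1)] by (simp split: if_splits)
next
  obtain \<omega> where w: "\<omega> \<in> qc_ant k H" "random_gain {0} A' B' (p(0:=z)) (\<lambda>_. 1) \<omega> \<ge> 0"
    using coh_get[OF coh, of "{0}"] by auto
  then show "z \<le> 1" unfolding gain_phi using phi_gzero[OF w(1)] by (simp split: if_splits)
qed

lemma nec_lo:
  assumes coh: "coherent (insert 0 {1..k}) A' B' (p(0:=z))"
  shows "T_L k p \<le> z"
proof -
  define s where "s (j::nat) = (if j = 0 then -1 else 1::real)" for j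
  obtain \<omega> where w: "\<omega> \<in> qc_ant k H" "random_gain (insert 0 {1..k}) A' B' (p(0:=z)) s \<omega> \<ge> 0"
    using coh_get[OF coh, of "insert 0 {1..k}"] by auto
  define t where "t i = phi A' B' (p(0:=z)) i \<omega>" for i
  have g: "random_gain (insert 0 {1..k}) A' B' (p(0:=z)) s \<omega> = z - (if \<omega> \<in> qc_cons k E H then 1 else 0) + sum t {1..k}"
    unfolding gain_full phi_gzero[OF w(1)] s_def t_def by simp
  have tle: "t i \<le> 1 - p i" if "i \<in> {1..k}" for i
    unfolding t_def phi_gpos[OF that] using pk[OF that] by auto
  have "sum t {1..k} \<le> Q - (if \<omega> \<in> qc_cons k E H then 0 else 1)"
  proof (cases "\<omega> \<in> qc_cons k E H")
    case True
    have "sum t {1..k} \<le> Q" unfolding Q_def by (rule sum_mono) (use tle in auto)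
    then show ?thesis using True by simp
  next
    case False
    then obtain i0 where i0: "i0 \<in> {1..k}" "\<omega> \<in> H i0" "\<omega> \<notin> E i0" unfolding qc_cons_def by blast
    have "sum t {1..k} \<le> (\<Sum>i\<in>{1..k}. (1 - p i) - (if i = i0 then 1 else 0))"
    proof (rule sum_mono)
      fix i assume i: "i \<in> {1..k}"
      show "t i \<le> (1 - p i) - (if i = i0 then 1 else 0)"
        using tle[OF i] i0 unfolding t_def phi_gpos[OF i] by auto
    qed
    also have "\<dots> = Q - 1" unfolding Q_def sum_subtractf using i0(1) by simp
    finally show ?thesis using False by simp
  qed
  then have "z \<ge> 1 - Q" using w(2) g by (simp split: if_splits)
  then show ?thesis unfolding TL_eq using nec01(1)[OF coh] by simp
qed

lemma nec_up:
  assumes coh: "coherent (insert 0 {1..k}) A' B' (p(0:=z))"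
  shows "z \<le> S0H k p"
proof (cases "\<exists>i\<in>{1..k}. p i = 1")
  case True
  then show ?thesis unfolding S0H_def using nec01(2)[OF coh] by simp
next
  case False
  have plt: "p m < 1" if "m \<in> {1..k}" for m using False pk[OF that] that by force
  define \<sigma> where "\<sigma> = (\<Sum>i=1..k. p i / (1 - p i))"
  have snn: "\<sigma> \<ge> 0" unfolding \<sigma>_def using pk plt by (intro sum_nonneg divide_nonneg_pos) auto
  have S: "S0H k p = \<sigma> / (\<sigma> + 1)" unfolding S0H_def \<sigma>_def using False by (simp add: Let_def)
  define c where "c = 1 / (1 + \<sigma>)"
  have cpos: "c > 0" unfolding c_def using snn by simp
  define s where "s j = (if j = 0 then 1 else - c / (1 - p j))" for j
  obtain \<omega> where w: "\<omega> \<in> qc_ant k H" "random_gain (insert 0 {1..k}) A' B' (p(0:=z)) s \<omega> \<ge> 0"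
    using coh_get[OF coh, of "insert 0 {1..k}"] by auto
  define u where "u i = s i * phi A' B' (p(0:=z)) i \<omega>" for i
  have g: "random_gain (insert 0 {1..k}) A' B' (p(0:=z)) s \<omega> = (if \<omega> \<in> qc_cons k E H then 1 else 0) - z + sum u {1..k}"
    unfolding gain_full phi_gzero[OF w(1)] s_def u_def by simp
  have u_val: "u i = (if \<omega> \<in> H i then (if \<omega> \<in> E i then - c else c * (p i / (1 - p i))) else 0)" if i: "i \<in> {1..k}" for i
  proof -
    have "1 - p i > 0" using plt[OF i] by simp
    then show ?thesis unfolding u_def s_def phi_gpos[OF i] using i by (auto simp: field_simps)
  qed
  have key: "c * \<sigma> = 1 - c" unfolding c_def using snn by (simp add: field_simps)
  have "(if \<omega> \<in> qc_cons k E H then 1 else 0) + sum u {1..k} \<le> c * \<sigma>"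
  proof (cases "\<omega> \<in> qc_cons k E H")
    case True
    obtain i0 where i0: "i0 \<in> {1..k}" "\<omega> \<in> H i0" using w(1) unfolding qc_ant_def by blast
    have HE: "\<omega> \<in> E i" if "i \<in> {1..k}" "\<omega> \<in> H i" for i using True that unfolding qc_cons_def by blast
    have "sum u {1..k} \<le> (\<Sum>i\<in>{1..k}. - c * (if i = i0 then 1 else 0))"
    proof (rule sum_mono)
      fix i assume i: "i \<in> {1..k}"
      show "u i \<le> - c * (if i = i0 then 1 else 0)"
        unfolding u_val[OF i] using HE[OF i] i0 cpos by auto
    qed
    also have "\<dots> = - c * (\<Sum>i\<in>{1..k}. (if i = i0 then 1 else 0))" by (rule sum_distrib_left[symmetric])
    also have "\<dots> = - c" using i0(1) by simp
    finally show ?thesis using True key by simp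
  next
    case False
    have "sum u {1..k} \<le> (\<Sum>i\<in>{1..k}. c * (p i / (1 - p i)))"
    proof (rule sum_mono)
      fix i assume i: "i \<in> {1..k}"
      have "p i / (1 - p i) \<ge> 0" using pk[OF i] plt[OF i] by simp
      then have cc: "c * (p i / (1 - p i)) \<ge> 0" using cpos by (intro mult_nonneg_nonneg) auto
      show "u i \<le> c * (p i / (1 - p i))"
        unfolding u_val[OF i] using cpos cc by auto
    qed
    also have "\<dots> = c * \<sigma>" unfolding \<sigma>_def by (simp add: sum_distrib_left)
    finally show ?thesis using False by simp
  qed
  then have "z \<le> c * \<sigma>" using w(2) g by simp
  moreover have "c * \<sigma> = \<sigma> / (\<sigma> + 1)" unfolding c_def by (simp add: add.commute)
  ultimately show ?thesis unfolding S by simp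
qed

end


theorem theorem5:
  fixes n :: nat and E H :: "nat \<Rightarrow> 'w set" and p :: "nat \<Rightarrow> real"
  assumes "logically_independent n E H"
    and "\<forall>i\<in>{1..n}. 0 \<le> p i \<and> p i \<le> 1"
  shows "\<forall>k\<in>{2..n}.
    {z. coherent (insert 0 {1..k}) (ext_cons k E H) (ext_ant k H) (p(0 := z))}
      = {T_L k p .. S0H k p}"
proof
  fix k assume k: "k \<in> {2..n}"
  interpret c: ctx n E H p k using assms k by unfold_locales auto
  show "{z. coherent (insert 0 {1..k}) (ext_cons k E H) (ext_ant k H) (p(0 := z))} = {T_L k p .. S0H k p}"
  proof (intro set_eqI iffI)
    fix z assume "z \<in> {z. coherent (insert 0 {1..k}) (ext_cons k E H) (ext_ant k H) (p(0 := z))}"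
    then have "coherent (insert 0 {1..k}) (ext_cons k E H) (ext_ant k H) (p(0 := z))" by simp
    then show "z \<in> {T_L k p .. S0H k p}" using c.nec_lo c.nec_up by simp
  next
    fix z assume "z \<in> {T_L k p .. S0H k p}"
    then have "T_L k p \<le> z" "z \<le> S0H k p" by auto
    then show "z \<in> {z. coherent (insert 0 {1..k}) (ext_cons k E H) (ext_ant k H) (p(0 := z))}" using c.suff by simp
  qed
qed

end
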